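(* Let $\Gamma$ be a strictly positive definite, irreducible $n\times n$ covariance matrix such that $\Gamma^{-1}$ is an $M$-matrix, and for $t>0$ let $Q(t)=[I+(t\Gamma)^{-1}]^{-1}=I-(I+t\Gamma)^{-1}$. Then for all $t$ sufficiently large, every entry of $Q(t)$ is strictly positive.
   Context: A non-singular matrix $A$ is an $M$-matrix if all entries of $A^{-1}$ are non-negative and $A_{i,j}\le 0$ for all $i\ne j$. A symmetric matrix is irreducible if it cannot be written as a direct sum of square matrices. *)

theory Defs
  imports "HOL-Analysis.Analysis"
begin

definition pos_def_matrix :: "real^'n^'n \<Rightarrow> bool" where
  "pos_def_matrix A \<longleftrightarrow> transpose A = A \<and> (\<forall>x. x \<noteq> 0 \<longrightarrow> x \<bullet> (A *v x) > 0)"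

definition M_matrix :: "real^'n^'n \<Rightarrow> bool" where
  "M_matrix A \<longleftrightarrow> invertible A \<and> (\<forall>i j. matrix_inv A $ i $ j \<ge> 0)
     \<and> (\<forall>i j. i \<noteq> j \<longrightarrow> A $ i $ j \<le> 0)"

text \<open>A symmetric matrix is irreducible iff it cannot be written (after simultaneous
  permutation of rows and columns) as a direct sum of square matrices, i.e. there is no
  nonempty proper index set S with A i j = 0 whenever i in S and j not in S.\<close>
definition irreducible_matrix :: "real^'n^'n \<Rightarrow> bool" where
  "irreducible_matrix A \<longleftrightarrow>
     \<not> (\<exists>S. S \<noteq> {} \<and> S \<noteq> UNIV \<and> (\<forall>i\<in>S. \<forall>j. j \<notin> S \<longrightarrow> A $ i $ j = 0))"

definition Q_mat :: "real^'n^'n \<Rightarrow> real \<Rightarrow> real^'n^'n" where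
  "Q_mat \<Gamma> t = matrix_inv (mat 1 + matrix_inv (t *\<^sub>R \<Gamma>))"

end

theory Submission
  imports Defs
begin

lemma inv_eq:
  fixes A B :: "real^'n^'n"
  assumes "A ** B = mat 1"
  shows "matrix_inv A = B"
proof -
  have BA: "B ** A = mat 1" using assms matrix_left_right_inverse by blast
  have "A ** matrix_inv A = mat 1 \<and> matrix_inv A ** A = mat 1"
    unfolding matrix_inv_def by (rule someI[of _ B]) (use assms BA in auto)
  then have "matrix_inv A = (B ** A) ** matrix_inv A" using BA by simp
  also have "\<dots> = B ** (A ** matrix_inv A)" by (simp add: matrix_mul_assoc)
  finally show ?thesis using \<open>A ** matrix_inv A = mat 1 \<and> _\<close> by simp
qed

lemma core_nonneg:
  fixes M :: "'n::finite \<Rightarrow> 'n \<Rightarrow> real"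
  assumes s: "s > 0" and w: "\<forall>k. w k > 0" and Mw: "\<forall>i. (\<Sum>k\<in>UNIV. M i k * w k) = 1"
    and off: "\<forall>i k. i \<noteq> k \<longrightarrow> M i k \<le> 0"
    and eq: "\<forall>i. q i + s * (\<Sum>k\<in>UNIV. M i k * q k) = (if i = j then 1 else 0)"
  shows "\<forall>k. q k \<ge> 0"
proof (rule ccontr)
  assume "\<not> (\<forall>k. q k \<ge> 0)"
  then obtain k0 where k0: "q k0 < 0" by (auto simp: not_le)
  define r where "r k = q k / w k" for k
  have qk: "q k = w k * r k" for k using w by (simp add: r_def) (metis less_irrefl)
  have fin: "finite (range r)" by simp
  have "Min (range r) \<in> range r" using fin by (intro Min_in) auto
  then obtain i where i: "r i = Min (range r)" by (metis rangeE)
  have imin: "r i \<le> r k" for k using i fin by simp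
  have "r k0 < 0" using k0 w by (simp add: r_def divide_neg_pos)
  hence ri: "r i < 0" using imin[of k0] by linarith
  have "(\<Sum>k\<in>UNIV. M i k * q k) = (\<Sum>k\<in>UNIV. r i * (M i k * w k) + M i k * w k * (r k - r i))"
    by (rule sum.cong) (auto simp: qk algebra_simps)
  also have "\<dots> = r i * (\<Sum>k\<in>UNIV. M i k * w k) + (\<Sum>k\<in>UNIV. M i k * w k * (r k - r i))"
    by (simp add: sum.distrib sum_distrib_left)
  also have "\<dots> \<le> r i"
  proof -
    have "(\<Sum>k\<in>UNIV. M i k * w k * (r k - r i)) \<le> 0"
    proof (rule sum_nonpos)
      fix k
      show "M i k * w k * (r k - r i) \<le> 0"
      proof (cases "k = i")
        case False
        have "M i k * w k \<le> 0" using off False w by (simp add: mult_nonpos_nonneg less_imp_le)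
        moreover have "r k - r i \<ge> 0" using imin[of k] by simp
        ultimately show ?thesis by (simp add: mult_nonpos_nonneg)
      qed simp
    qed
    thus ?thesis using Mw by simp
  qed
  finally have S: "(\<Sum>k\<in>UNIV. M i k * q k) \<le> r i" .
  have "q i < 0" using qk[of i] w ri by (simp add: mult_pos_neg)
  moreover have "s * (\<Sum>k\<in>UNIV. M i k * q k) < 0" using S ri s by (simp add: mult_pos_neg)
  ultimately have "q i + s * (\<Sum>k\<in>UNIV. M i k * q k) < 0" by linarith
  thus False using eq[rule_format, of i] by (simp split: if_splits)
qed

lemma core_zero:
  fixes M :: "'n::finite \<Rightarrow> 'n \<Rightarrow> real"
  assumes s: "s > 0"
    and off: "\<forall>i k. i \<noteq> k \<longrightarrow> M i k \<le> 0"
    and eq: "\<forall>i. q i + s * (\<Sum>k\<in>UNIV. M i k * q k) = (if i = j then 1 else 0)"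
    and nn: "\<forall>k. q k \<ge> 0" and qi: "q i = 0"
  shows "i \<noteq> j \<and> (\<forall>k. q k > 0 \<longrightarrow> M i k = 0)"
proof -
  have t: "- (M i k * q k) \<ge> 0" for k
  proof (cases "k = i")
    case False thus ?thesis using off nn by (simp add: mult_nonpos_nonneg)
  qed (simp add: qi)
  have S0: "(\<Sum>k\<in>UNIV. - (M i k * q k)) \<ge> 0" by (rule sum_nonneg) (use t in auto)
  have E: "s * (\<Sum>k\<in>UNIV. M i k * q k) = (if i = j then 1 else 0)" using eq[rule_format, of i] qi by simp
  have "(\<Sum>k\<in>UNIV. M i k * q k) \<le> 0" using S0 by (simp add: sum_negf)
  hence "s * (\<Sum>k\<in>UNIV. M i k * q k) \<le> 0" using s by (simp add: mult_nonneg_nonpos)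
  hence ij: "i \<noteq> j" and "s * (\<Sum>k\<in>UNIV. M i k * q k) = 0" using E by (auto split: if_splits)
  hence "(\<Sum>k\<in>UNIV. M i k * q k) = 0" using s by simp
  hence "(\<Sum>k\<in>UNIV. - (M i k * q k)) = 0" by (simp add: sum_negf)
  moreover have "(\<Sum>k\<in>UNIV. - (M i k * q k)) = 0 \<longleftrightarrow> (\<forall>k\<in>UNIV. - (M i k * q k) = 0)"
    by (rule sum_nonneg_eq_0_iff) (simp, rule t)
  ultimately have Z: "\<forall>k\<in>UNIV. - (M i k * q k) = 0" by blast
  have "\<forall>k. q k > 0 \<longrightarrow> M i k = 0"
  proof (intro allI impI)
    fix k assume "q k > 0"
    moreover have "M i k * q k = 0" using Z by simp
    ultimately show "M i k = 0" by simp
  qed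
  thus ?thesis using ij by blast
qed

lemma scaleR_mv: fixes A :: "real^'n^'m" shows "(c *\<^sub>R A) *v x = c *\<^sub>R (A *v x)"
  by (simp add: vec_eq_iff matrix_vector_mult_def sum_distrib_left mult.assoc)

lemma scaleR_mm: fixes A B :: "real^'n^'n" shows "(a *\<^sub>R A) ** (b *\<^sub>R B) = (a*b) *\<^sub>R (A ** B)"
  by (simp add: matrix_matrix_mult_def vec_eq_iff sum_distrib_left mult_ac)

theorem lemma1p7:
  fixes \<Gamma> :: "real^'n^'n"
  assumes "pos_def_matrix \<Gamma>"
    and "irreducible_matrix \<Gamma>"
    and "M_matrix (matrix_inv \<Gamma>)"
  shows "\<exists>T. \<forall>t>T. \<forall>i j. Q_mat \<Gamma> t $ i $ j > 0"
proof -
  define M where "M = matrix_inv \<Gamma>"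
  have symG: "transpose \<Gamma> = \<Gamma>" and pd: "\<And>x. x \<noteq> 0 \<Longrightarrow> x \<bullet> (\<Gamma> *v x) > 0"
    using assms(1) unfolding pos_def_matrix_def by auto
  have "\<forall>x. \<Gamma> *v x = 0 \<longrightarrow> x = 0"
  proof (intro allI impI)
    fix x :: "real^'n" assume "\<Gamma> *v x = 0"
    show "x = 0"
    proof (rule ccontr)
      assume "x \<noteq> 0"
      hence "x \<bullet> (\<Gamma> *v x) > 0" by (rule pd)
      thus False using \<open>\<Gamma> *v x = 0\<close> by simp
    qed
  qed
  then obtain B where "B ** \<Gamma> = mat 1" using matrix_left_invertible_ker[of \<Gamma>] by blast
  hence "\<Gamma> ** B = mat 1" using matrix_left_right_inverse by blast
  hence GM: "\<Gamma> ** M = mat 1" using inv_eq[of \<Gamma> B] M_def by simp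
  hence MG: "M ** \<Gamma> = mat 1" using matrix_left_right_inverse by blast
  hence Minv: "matrix_inv M = \<Gamma>" by (rule inv_eq)
  have Gnn: "\<And>i j. \<Gamma>$i$j \<ge> 0" using assms(3) Minv unfolding M_matrix_def M_def[symmetric] by auto
  have Moff: "\<And>i j. i \<noteq> j \<Longrightarrow> M$i$j \<le> 0" using assms(3) unfolding M_matrix_def M_def[symmetric] by auto
  have "transpose (\<Gamma> ** M) = mat 1" using GM by simp
  hence "transpose M ** \<Gamma> = mat 1" using symG by (simp add: matrix_transpose_mul)
  hence "\<Gamma> ** transpose M = mat 1" using matrix_left_right_inverse by blast
  hence "matrix_inv \<Gamma> = transpose M" by (rule inv_eq)
  hence MT: "transpose M = M" using M_def by simp
  have Msym: "M$i$j = M$j$i" for i j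
  proof -
    have "M$j$i = (transpose M)$i$j" by (simp add: transpose_def)
    thus ?thesis using MT by simp
  qed
  have Gdiag: "\<Gamma>$i$i > 0" for i
  proof -
    have "axis i (1::real) \<noteq> 0" by (simp add: axis_eq_0_iff)
    hence "axis i 1 \<bullet> (\<Gamma> *v axis i 1) > 0" by (rule pd)
    moreover have "(\<Gamma> *v axis i 1) $ i = \<Gamma>$i$i"
      by (simp add: matrix_vector_mult_basis column_def)
    ultimately show ?thesis by (simp add: inner_axis')
  qed
  define w where "w = \<Gamma> *v (vec 1)"
  have wpos: "w$k > 0" for k
  proof -
    have "w$k = (\<Sum>l\<in>UNIV. \<Gamma>$k$l)" by (simp add: w_def matrix_vector_mult_def)
    also have "\<dots> \<ge> \<Gamma>$k$k" by (rule member_le_sum) (auto simp: Gnn)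
    finally show ?thesis using Gdiag[of k] by linarith
  qed
  have "M *v w = vec 1" by (simp add: w_def matrix_vector_mul_assoc MG)
  have Mw: "\<forall>i. (\<Sum>k\<in>UNIV. M$i$k * w$k) = 1"
  proof
    fix i
    have "(M *v w)$i = 1" using \<open>M *v w = vec 1\<close> by simp
    thus "(\<Sum>k\<in>UNIV. M$i$k * w$k) = 1" by (simp add: matrix_vector_mult_def)
  qed
  have main: "Q_mat \<Gamma> t $ i $ j > 0" if t: "t > 0" for t i j
  proof -
    define s where "s = 1 / t"
    have s: "s > 0" using t by (simp add: s_def)
    have "(t *\<^sub>R \<Gamma>) ** (s *\<^sub>R M) = mat 1" using t by (simp add: scaleR_mm GM s_def)
    hence "matrix_inv (t *\<^sub>R \<Gamma>) = s *\<^sub>R M" by (rule inv_eq)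
    hence Qd: "Q_mat \<Gamma> t = matrix_inv (mat 1 + s *\<^sub>R M)" by (simp add: Q_mat_def)
    define A where "A = mat 1 + s *\<^sub>R M"
    have "\<forall>x. A *v x = 0 \<longrightarrow> x = 0"
    proof (intro allI impI)
      fix x assume Ax: "A *v x = 0"
      have "\<Gamma> ** A = \<Gamma> + s *\<^sub>R mat 1"
        by (simp add: A_def matrix_add_ldistrib matrix_scalar_ac GM flip: scalar_matrix_assoc)
      hence "\<Gamma> *v (A *v x) = \<Gamma> *v x + s *\<^sub>R x"
        by (simp add: matrix_vector_mul_assoc matrix_vector_mult_add_rdistrib scaleR_mv)
      hence E: "\<Gamma> *v x + s *\<^sub>R x = 0" using Ax by simp
      show "x = 0"
      proof (rule ccontr)
        assume "x \<noteq> 0"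
        hence "x \<bullet> (\<Gamma> *v x) > 0" "x \<bullet> x > 0" by (auto intro: pd)
        moreover have "x \<bullet> (\<Gamma> *v x + s *\<^sub>R x) = 0" using E by simp
        moreover have "x \<bullet> (\<Gamma> *v x + s *\<^sub>R x) = x \<bullet> (\<Gamma> *v x) + s * (x \<bullet> x)"
          by (simp add: inner_add_right)
        moreover have "s * (x \<bullet> x) > 0" using s \<open>x \<bullet> x > 0\<close> by simp
        ultimately show False by linarith
      qed
    qed
    then obtain B where "B ** A = mat 1" using matrix_left_invertible_ker[of A] by blast
    hence AQ: "A ** B = mat 1" using matrix_left_right_inverse by blast
    have QB: "Q_mat \<Gamma> t = B" using Qd inv_eq[OF AQ] A_def by simp
    define q where "q k = B$k$j" for k
    have eq: "\<forall>i. q i + s * (\<Sum>k\<in>UNIV. M$i$k * q k) = (if i = j then 1 else 0)"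
    proof
      fix i
      have "(A ** B)$i$j = (\<Sum>k\<in>UNIV. ((if i = k then 1 else 0) + s * M$i$k) * q k)"
        by (simp add: matrix_matrix_mult_def A_def mat_def q_def)
      also have "\<dots> = (\<Sum>k\<in>UNIV. (if i = k then q k else 0)) + s * (\<Sum>k\<in>UNIV. M$i$k * q k)"
      proof -
        have "(\<Sum>k\<in>UNIV. ((if i = k then 1 else 0) + s * M$i$k) * q k)
            = (\<Sum>k\<in>UNIV. (if i = k then q k else 0) + s * (M$i$k * q k))"
          by (rule sum.cong) (auto simp: algebra_simps)
        thus ?thesis by (simp add: sum.distrib sum_distrib_left)
      qed
      also have "\<dots> = q i + s * (\<Sum>k\<in>UNIV. M$i$k * q k)" by simp
      finally show "q i + s * (\<Sum>k\<in>UNIV. M$i$k * q k) = (if i = j then 1 else 0)"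
        using AQ by (simp add: mat_def)
    qed
    have nn: "\<forall>k. q k \<ge> 0"
      by (rule core_nonneg[of s "\<lambda>k. w$k" "\<lambda>i k. M$i$k" q j]) (simp_all add: s wpos Mw Moff eq)
    show ?thesis
    proof (rule ccontr)
      assume "\<not> ?thesis"
      hence "q i = 0" using nn[rule_format, of i] QB by (simp add: q_def)
      define Z where "Z = {k. q k = 0}"
      have Zprop: "a \<in> Z \<Longrightarrow> a \<noteq> j \<and> (\<forall>k. k \<notin> Z \<longrightarrow> M$a$k = 0)" for a
      proof -
        assume "a \<in> Z"
        hence "a \<noteq> j \<and> (\<forall>k. q k > 0 \<longrightarrow> M$a$k = 0)"
          using core_zero[of s "\<lambda>i k. M$i$k" q j a] s Moff eq nn \<open>a \<in> Z\<close> Z_def by simp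
        thus ?thesis using nn unfolding Z_def by (auto simp: order_le_less)
      qed
      have blk: "(a \<in> Z) \<noteq> (k \<in> Z) \<Longrightarrow> M$a$k = 0" for a k
      proof (cases "a \<in> Z")
        case True
        assume "(a \<in> Z) \<noteq> (k \<in> Z)"
        thus ?thesis using True Zprop[OF True] by simp
      next
        case False
        assume "(a \<in> Z) \<noteq> (k \<in> Z)"
        hence kZ: "k \<in> Z" using False by simp
        have "M$k$a = 0" using Zprop[OF kZ] False by simp
        thus ?thesis using Msym[of a k] by simp
      qed
      define G' where "G' = (\<chi> a b. if (a \<in> Z) = (b \<in> Z) then \<Gamma>$a$b else 0)"
      have "M ** G' = mat 1"
      proof -
        have "(M ** G')$a$b = (mat 1 :: real^'n^'n)$a$b" for a b
        proof (cases "(a \<in> Z) = (b \<in> Z)")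
          case True
          have "(M ** G')$a$b = (\<Sum>k\<in>UNIV. M$a$k * G'$k$b)" by (simp add: matrix_matrix_mult_def)
          also have "\<dots> = (\<Sum>k\<in>UNIV. M$a$k * \<Gamma>$k$b)"
          proof (rule sum.cong[OF refl])
            fix k
            show "M$a$k * G'$k$b = M$a$k * \<Gamma>$k$b"
            proof (cases "(k \<in> Z) = (b \<in> Z)")
              case True thus ?thesis by (simp add: G'_def)
            next
              case False
              hence "M$a$k = 0" using \<open>(a \<in> Z) = (b \<in> Z)\<close> by (intro blk) simp
              thus ?thesis by simp
            qed
          qed
          also have "\<dots> = (M ** \<Gamma>)$a$b" by (simp add: matrix_matrix_mult_def)
          finally show ?thesis using MG by simp
        next
          case False
          have "(M ** G')$a$b = (\<Sum>k\<in>UNIV. M$a$k * G'$k$b)" by (simp add: matrix_matrix_mult_def)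
          also have "\<dots> = 0"
          proof (rule sum.neutral, rule ballI)
            fix k
            show "M$a$k * G'$k$b = 0"
            proof (cases "(k \<in> Z) = (b \<in> Z)")
              case False thus ?thesis by (simp add: G'_def)
            next
              case True
              hence "M$a$k = 0" using \<open>(a \<in> Z) \<noteq> (b \<in> Z)\<close> by (intro blk) simp
              thus ?thesis by simp
            qed
          qed
          finally show ?thesis using False by (auto simp: mat_def)
        qed
        thus ?thesis by (simp add: vec_eq_iff)
      qed
      hence "matrix_inv M = G'" by (rule inv_eq)
      hence "G' = \<Gamma>" using Minv by simp
      have "\<forall>a\<in>Z. \<forall>b. b \<notin> Z \<longrightarrow> \<Gamma>$a$b = 0"
      proof (intro ballI allI impI)
        fix a b assume "a \<in> Z" "b \<notin> Z"
        have "\<Gamma>$a$b = G'$a$b" using \<open>G' = \<Gamma>\<close> by simp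
        also have "\<dots> = 0" using \<open>a \<in> Z\<close> \<open>b \<notin> Z\<close> by (simp add: G'_def)
        finally show "\<Gamma>$a$b = 0" .
      qed
      moreover have "Z \<noteq> {}" using \<open>q i = 0\<close> Z_def by auto
      moreover have "Z \<noteq> UNIV" using Zprop by auto
      ultimately show False using assms(2) unfolding irreducible_matrix_def by blast
    qed
  qed
  show ?thesis by (rule exI[of _ 0]) (simp add: main)
qed

end
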